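(* Let $\gamma>0$, $q\in L^1(0,\infty)$ and $R>0$. Let $\lambda\in\mathbb C\setminus[0,\infty)$ with $\lambda\neq i\gamma$. Then $\lambda$ is an eigenvalue of $H_R$ if and only if $f_R(\lambda)=0$, where $$f_R(\lambda):=\psi_-(0,\lambda-i\gamma)\big(\sqrt{\lambda}-\sqrt{\lambda-i\gamma}+\mathcal E_1(R,\lambda)\big)e^{i\sqrt{\lambda-i\gamma}R}-\psi_+(0,\lambda-i\gamma)\big(\sqrt{\lambda}+\sqrt{\lambda-i\gamma}+\mathcal E_2(R,\lambda)\big)e^{-i\sqrt{\lambda-i\gamma}R},$$ with, for $\lambda\in\mathbb C\setminus\{0,i\gamma\}$, $$\mathcal E_1(R,\lambda)=\sqrt{\lambda}\big(E_+(R,\lambda-i\gamma)+E^d_+(R,\lambda)+E_+(R,\lambda-i\gamma)E^d_+(R,\lambda)\big)-\sqrt{\lambda-i\gamma}\big(E^d_+(R,\lambda-i\gamma)+E_+(R,\lambda)+E^d_+(R,\lambda-i\gamma)E_+(R,\lambda)\big),$$ $$\mathcal E_2(R,\lambda)=\sqrt{\lambda}\big(E^d_+(R,\lambda)+E_-(R,\lambda-i\gamma)+E^d_+(R,\lambda)E_-(R,\lambda-i\gamma)\big)+\sqrt{\lambda-i\gamma}\big(E_+(R,\lambda)+E^d_-(R,\lambda-i\gamma)+E_+(R,\lambda)E^d_-(R,\lambda-i\gamma)\big).$$ Moreover, there is a constant $\mathcal C_1=\mathcal C_1(q,\gamma)>0$ such that $|\mathcal E_1(R,\lambda)|+|\mathcal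 E_2(R,\lambda)|\le\mathcal C_1$ for all $R>0$ and all $\lambda\in\mathbb C$ with $|\lambda|\ge1+\gamma$; and $f_R$, $\mathcal E_1(R,\cdot)$, $\mathcal E_2(R,\cdot)$ are analytic on $\mathbb C\setminus\big([0,\infty)\cup(i\gamma+[0,\infty))\big)$.
   Context: Fix $\gamma>0$ and $q\in L^1(0,\infty)$. For $R>0$, $H_R=-\frac{d^2}{dx^2}+q+i\gamma\chi_{[0,R]}$ on $L^2(0,\infty)$ with Dirichlet boundary condition at $0$ ($\chi_{[0,R]}$ the indicator function of $[0,R]$). The square root has its branch cut along $[0,\infty)$, so $\operatorname{Im}\sqrt z\ge0$ for all $z\in\mathbb C$. By Levinson's asymptotic theorem, for each $\lambda\in\mathbb C\setminus\{0\}$ the solution space of $-u''+qu=\lambda u$ on $[0,\infty)$ is spanned by two solutions $\psi_\pm(\cdot,\lambda)$ of the form $\psi_\pm(x,\lambda)=e^{\pm i\sqrt\lambda x}(1+E_\pm(x,\lambda))$, $\psi_\pm'(x,\lambda)=\pm i\sqrt\lambda e^{\pm i\sqrt\lambda x}(1+E^d_\pm(x,\lambda))$ (prime denotes $d/dx$), where $|E_\pm(x,\lambda)|+|E^d_\pm(x,\lambda)|\to0$ as $x\to\infty$ for each $\lambda\ne0$, $|E_\pm(x,\lambda)|+|E_\pm^d(x,\lambda)|\le C(q)/\sqrt{|\lambda|}$ for all $x\ge0$ and $|\lambda|\ge1$, and $E_\pm(x,\cdot)$, $E^d_\pm(x,\cdot)$ are analytic on $\mathbb C\setminus[0,\infty)$;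 these $\psi_\pm$, $E_\pm$, $E_\pm^d$ are fixed throughout. *)

theory Defs
  imports "HOL-Complex_Analysis.Complex_Analysis"
begin

text \<open>Square root with branch cut along [0,\<infinity>), so that Im (sqrt z) \<ge> 0.
  On the cut itself we take the nonnegative real root.\<close>
definition csqrt_up :: "complex \<Rightarrow> complex" where
  "csqrt_up z = (if Im z = 0 \<and> Re z \<ge> 0 then complex_of_real (sqrt (Re z))
                 else \<i> * csqrt (- z))"

definition nonneg_axis :: "complex set" where
  "nonneg_axis = complex_of_real ` {0..}"

text \<open>(u, u') is a (Caratheodory) solution on [0,\<infinity>) of  -u'' + V u = z u :
  u and u' are locally absolutely continuous, u' is the derivative of u and
  u'' = (V - z) u almost everywhere, written in integral form.\<close>
definition solves :: "(real \<Rightarrow> complex) \<Rightarrow> complex \<Rightarrow> (real \<Rightarrow> complex) \<Rightarrow> (real \<Rightarrow> complex) \<Rightarrow> bool" where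
  "solves V z u u' \<longleftrightarrow>
     (\<forall>x\<ge>0. set_integrable lborel {0..x} u'
          \<and> set_integrable lborel {0..x} (\<lambda>t. (V t - z) * u t)
          \<and> u x = u 0 + (LINT t:{0..x}|lborel. u' t)
          \<and> u' x = u' 0 + (LINT t:{0..x}|lborel. (V t - z) * u t))"

text \<open>\<lambda> is an eigenvalue of H_R = -d^2/dx^2 + q + i\<gamma>\<chi>_[0,R] on L^2(0,\<infinity>) with
  Dirichlet condition at 0: there is a nonzero L^2 solution of H_R u = lam u in the
  operator domain with u(0) = 0.\<close>
definition is_eigenvalue_HR :: "(real \<Rightarrow> complex) \<Rightarrow> real \<Rightarrow> real \<Rightarrow> complex \<Rightarrow> bool" where
  "is_eigenvalue_HR q \<gamma> R lam \<longleftrightarrow>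
     (\<exists>u u'. solves (\<lambda>t. q t + \<i> * complex_of_real \<gamma> * indicator {0..R} t) lam u u'
          \<and> u 0 = 0
          \<and> set_integrable lborel {0..} (\<lambda>x. (cmod (u x))\<^sup>2)
          \<and> (\<exists>x\<ge>0. u x \<noteq> 0))"

definition psi_p :: "(real \<Rightarrow> complex \<Rightarrow> complex) \<Rightarrow> real \<Rightarrow> complex \<Rightarrow> complex" where
  "psi_p Ep x lam = exp (\<i> * csqrt_up lam * complex_of_real x) * (1 + Ep x lam)"

definition psi_m :: "(real \<Rightarrow> complex \<Rightarrow> complex) \<Rightarrow> real \<Rightarrow> complex \<Rightarrow> complex" where
  "psi_m Em x lam = exp (- \<i> * csqrt_up lam * complex_of_real x) * (1 + Em x lam)"

definition dpsi_p :: "(real \<Rightarrow> complex \<Rightarrow> complex) \<Rightarrow> real \<Rightarrow> complex \<Rightarrow> complex" where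
  "dpsi_p Edp x lam = \<i> * csqrt_up lam * exp (\<i> * csqrt_up lam * complex_of_real x) * (1 + Edp x lam)"

definition dpsi_m :: "(real \<Rightarrow> complex \<Rightarrow> complex) \<Rightarrow> real \<Rightarrow> complex \<Rightarrow> complex" where
  "dpsi_m Edm x lam = - \<i> * csqrt_up lam * exp (- \<i> * csqrt_up lam * complex_of_real x) * (1 + Edm x lam)"

definition calE1 :: "(real \<Rightarrow> complex \<Rightarrow> complex) \<Rightarrow> (real \<Rightarrow> complex \<Rightarrow> complex) \<Rightarrow> real \<Rightarrow> real \<Rightarrow> complex \<Rightarrow> complex" where
  "calE1 Ep Edp \<gamma> R lam =
     (let \<mu> = lam - \<i> * complex_of_real \<gamma> in
      csqrt_up lam * (Ep R \<mu> + Edp R lam + Ep R \<mu> * Edp R lam)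
      - csqrt_up \<mu> * (Edp R \<mu> + Ep R lam + Edp R \<mu> * Ep R lam))"

definition calE2 :: "(real \<Rightarrow> complex \<Rightarrow> complex) \<Rightarrow> (real \<Rightarrow> complex \<Rightarrow> complex) \<Rightarrow> (real \<Rightarrow> complex \<Rightarrow> complex) \<Rightarrow> (real \<Rightarrow> complex \<Rightarrow> complex) \<Rightarrow> real \<Rightarrow> real \<Rightarrow> complex \<Rightarrow> complex" where
  "calE2 Ep Em Edp Edm \<gamma> R lam =
     (let \<mu> = lam - \<i> * complex_of_real \<gamma> in
      csqrt_up lam * (Edp R lam + Em R \<mu> + Edp R lam * Em R \<mu>)
      + csqrt_up \<mu> * (Ep R lam + Edm R \<mu> + Ep R lam * Edm R \<mu>))"

definition fR :: "(real \<Rightarrow> complex \<Rightarrow> complex) \<Rightarrow> (real \<Rightarrow> complex \<Rightarrow> complex) \<Rightarrow> (real \<Rightarrow> complex \<Rightarrow> complex) \<Rightarrow> (real \<Rightarrow> complex \<Rightarrow> complex) \<Rightarrow> real \<Rightarrow> real \<Rightarrow> complex \<Rightarrow> complex" where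
  "fR Ep Em Edp Edm \<gamma> R lam =
     (let \<mu> = lam - \<i> * complex_of_real \<gamma> in
      psi_m Em 0 \<mu> * (csqrt_up lam - csqrt_up \<mu> + calE1 Ep Edp \<gamma> R lam)
        * exp (\<i> * csqrt_up \<mu> * complex_of_real R)
      - psi_p Ep 0 \<mu> * (csqrt_up lam + csqrt_up \<mu> + calE2 Ep Em Edp Edm \<gamma> R lam)
        * exp (- \<i> * csqrt_up \<mu> * complex_of_real R))"

end

theory Submission
  imports Defs
begin





lemma set_integral_point_open:
  fixes g :: "real \<Rightarrow> complex"
  shows "(LINT t:{0..<s}|lborel. g t) = (LINT t:{0..s}|lborel. g t)"
  by (rule set_integral_discrete_difference[where X="{s}"]) auto

lemma ibp0:
  fixes f g :: "real \<Rightarrow> complex"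
  assumes f: "set_integrable lborel {0..x} f" and g: "set_integrable lborel {0..x} g"
  shows "set_integrable lborel {0..x} (\<lambda>t. (LINT s:{0..t}|lborel. f s) * g t)"
    and "set_integrable lborel {0..x} (\<lambda>t. f t * (LINT s:{0..t}|lborel. g s))"
    and "(LINT t:{0..x}|lborel. (LINT s:{0..t}|lborel. f s) * g t)
       + (LINT t:{0..x}|lborel. f t * (LINT s:{0..t}|lborel. g s))
       = (LINT s:{0..x}|lborel. f s) * (LINT s:{0..x}|lborel. g s)"
proof -
  define F where "F s = indicator {0..x} s *\<^sub>R f s" for s
  define G where "G s = indicator {0..x} s *\<^sub>R g s" for s
  have Fi: "integrable lborel F" using f unfolding F_def set_integrable_def .
  have Gi: "integrable lborel G" using g unfolding G_def set_integrable_def .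
  have [measurable]: "F \<in> borel_measurable lborel" "G \<in> borel_measurable lborel"
    using Fi Gi by auto
  define H1 where "H1 s t = of_bool (s \<le> t) * (F s * G t)" for s t :: real
  define H2 where "H2 s t = of_bool (t < s) * (F s * G t)" for s t :: real
  define P where "P s t = F s * G t" for s t :: real
  have Pm[measurable]: "case_prod P \<in> borel_measurable (lborel \<Otimes>\<^sub>M lborel)"
    unfolding P_def by measurable
  have Pint: "integrable (lborel \<Otimes>\<^sub>M lborel) (case_prod P)"
  proof (rule lborel_pair.Fubini_integrable)
    have "(\<lambda>s. \<integral>t. norm (case_prod P (s, t)) \<partial>lborel) = (\<lambda>s. norm (F s) * (\<integral>t. norm (G t) \<partial>lborel))"
      by (simp add: P_def norm_mult)
    moreover have "integrable lborel (\<lambda>s. norm (F s) * (\<integral>t. norm (G t) \<partial>lborel))"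
      using Fi by auto
    ultimately show "integrable lborel (\<lambda>s. \<integral>t. norm (case_prod P (s, t)) \<partial>lborel)" by simp
    show "AE s in lborel. integrable lborel (\<lambda>t. case_prod P (s, t))"
      using Gi by (auto simp: P_def)
  qed simp
  have [measurable]: "case_prod H1 \<in> borel_measurable (lborel \<Otimes>\<^sub>M lborel)"
    unfolding H1_def by measurable
  have [measurable]: "case_prod H2 \<in> borel_measurable (lborel \<Otimes>\<^sub>M lborel)"
    unfolding H2_def by measurable
  have H1int: "integrable (lborel \<Otimes>\<^sub>M lborel) (case_prod H1)"
    by (rule Bochner_Integration.integrable_bound[OF Pint])
       (auto simp: H1_def P_def norm_mult)
  have H2int: "integrable (lborel \<Otimes>\<^sub>M lborel) (case_prod H2)"
    by (rule Bochner_Integration.integrable_bound[OF Pint])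
       (auto simp: H2_def P_def norm_mult)
  have in1: "(\<integral>s. H1 s t \<partial>lborel) = indicator {0..x} t *\<^sub>R ((LINT s:{0..t}|lborel. f s) * g t)" for t
  proof (cases "t \<in> {0..x}")
    case True
    have "(\<lambda>s. H1 s t) = (\<lambda>s. (indicator {0..t} s *\<^sub>R f s) * g t)"
      using True by (auto simp: H1_def F_def G_def indicator_def fun_eq_iff)
    then show ?thesis using True
      by (simp only: set_lebesgue_integral_def integral_mult_left_zero) simp
  next
    case False
    then show ?thesis by (simp add: H1_def G_def)
  qed
  have in2: "(\<integral>t. H2 s t \<partial>lborel) = indicator {0..x} s *\<^sub>R (f s * (LINT t:{0..s}|lborel. g t))" for s
  proof (cases "s \<in> {0..x}")
    case True
    have "(\<lambda>t. H2 s t) = (\<lambda>t. f s * (indicator {0..<s} t *\<^sub>R g t))"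
      using True by (auto simp: H2_def F_def G_def indicator_def fun_eq_iff)
    then have "(\<integral>t. H2 s t \<partial>lborel) = f s * (LINT t:{0..<s}|lborel. g t)"
      by (simp only: set_lebesgue_integral_def integral_mult_right_zero)
    then show ?thesis using True by (simp add: set_integral_point_open)
  next
    case False
    then show ?thesis by (simp add: H2_def F_def)
  qed
  have s1: "integrable lborel (\<lambda>t. \<integral>s. H1 s t \<partial>lborel)"
    using lborel_pair.integrable_snd[OF H1int] .
  then show A: "set_integrable lborel {0..x} (\<lambda>t. (LINT s:{0..t}|lborel. f s) * g t)"
    unfolding in1 set_integrable_def .
  have s2: "integrable lborel (\<lambda>s. \<integral>t. H2 s t \<partial>lborel)"
    using lborel_pair.integrable_fst[OF H2int] .
  then show B: "set_integrable lborel {0..x} (\<lambda>t. f t * (LINT s:{0..t}|lborel. g s))"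
    unfolding in2 set_integrable_def .
  have e1: "(LINT t:{0..x}|lborel. (LINT s:{0..t}|lborel. f s) * g t) = integral\<^sup>L (lborel \<Otimes>\<^sub>M lborel) (case_prod H1)"
    using lborel_pair.integral_snd[OF H1int] unfolding in1 set_lebesgue_integral_def by simp
  have e2: "(LINT t:{0..x}|lborel. f t * (LINT s:{0..t}|lborel. g s)) = integral\<^sup>L (lborel \<Otimes>\<^sub>M lborel) (case_prod H2)"
    using lborel_pair.integral_fst[OF H2int] unfolding in2 set_lebesgue_integral_def by simp
  have "integral\<^sup>L (lborel \<Otimes>\<^sub>M lborel) (case_prod H1) + integral\<^sup>L (lborel \<Otimes>\<^sub>M lborel) (case_prod H2)
      = integral\<^sup>L (lborel \<Otimes>\<^sub>M lborel) (case_prod P)"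
  proof -
    have "integral\<^sup>L (lborel \<Otimes>\<^sub>M lborel) (case_prod H1) + integral\<^sup>L (lborel \<Otimes>\<^sub>M lborel) (case_prod H2)
       = integral\<^sup>L (lborel \<Otimes>\<^sub>M lborel) (\<lambda>z. case_prod H1 z + case_prod H2 z)"
      using H1int H2int by simp
    also have "(\<lambda>z. case_prod H1 z + case_prod H2 z) = case_prod P"
      by (auto simp: H1_def H2_def P_def fun_eq_iff)
    finally show ?thesis .
  qed
  also have "\<dots> = (\<integral>s. (\<integral>t. P s t \<partial>lborel) \<partial>lborel)"
    using lborel_pair.integral_fst[OF Pint] by simp
  also have "\<dots> = (\<integral>s. F s \<partial>lborel) * (\<integral>t. G t \<partial>lborel)"
    by (simp add: P_def)
  also have "\<dots> = (LINT s:{0..x}|lborel. f s) * (LINT s:{0..x}|lborel. g s)"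
    by (simp add: F_def G_def set_lebesgue_integral_def)
  finally show "(LINT t:{0..x}|lborel. (LINT s:{0..t}|lborel. f s) * g t)
       + (LINT t:{0..x}|lborel. f t * (LINT s:{0..t}|lborel. g s))
       = (LINT s:{0..x}|lborel. f s) * (LINT s:{0..x}|lborel. g s)"
    using e1 e2 by simp
qed

lemma ibp:
  fixes f g F G :: "real \<Rightarrow> complex"
  assumes f: "set_integrable lborel {0..x} f" and g: "set_integrable lborel {0..x} g"
    and FF: "\<And>t. t \<in> {0..x} \<Longrightarrow> F t = F 0 + (LINT s:{0..t}|lborel. f s)"
    and GG: "\<And>t. t \<in> {0..x} \<Longrightarrow> G t = G 0 + (LINT s:{0..t}|lborel. g s)"
    and x: "0 \<le> x"
  shows "set_integrable lborel {0..x} (\<lambda>t. F t * g t + f t * G t)"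
    and "(LINT t:{0..x}|lborel. F t * g t + f t * G t) = F x * G x - F 0 * G 0"
proof -
  let ?Fi = "\<lambda>t. LINT s:{0..t}|lborel. f s"
  let ?Gi = "\<lambda>t. LINT s:{0..t}|lborel. g s"
  note I = ibp0[OF f g]
  have eq: "F t * g t + f t * G t
      = (F 0 * g t + f t * G 0) + (?Fi t * g t + f t * ?Gi t)" if "t \<in> {0..x}" for t
  proof -
    have a: "F t = F 0 + ?Fi t" "G t = G 0 + ?Gi t" using FF[OF that] GG[OF that] by auto
    show ?thesis unfolding a by (simp add: algebra_simps)
  qed
  have i1: "set_integrable lborel {0..x} (\<lambda>t. F 0 * g t + f t * G 0)"
    using f g by (intro set_integral_add) auto
  have i2: "set_integrable lborel {0..x} (\<lambda>t. ?Fi t * g t + f t * ?Gi t)"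
    using I by (intro set_integral_add) auto
  have i3: "set_integrable lborel {0..x} (\<lambda>t. (F 0 * g t + f t * G 0) + (?Fi t * g t + f t * ?Gi t))"
    using i1 i2 by (rule set_integral_add)
  then show "set_integrable lborel {0..x} (\<lambda>t. F t * g t + f t * G t)"
    by (rule set_integrable_cong[THEN iffD2, rotated 3]) (use eq in auto)
  have "(LINT t:{0..x}|lborel. F t * g t + f t * G t)
      = (LINT t:{0..x}|lborel. (F 0 * g t + f t * G 0) + (?Fi t * g t + f t * ?Gi t))"
    by (rule set_lebesgue_integral_cong) (use eq in auto)
  also have "\<dots> = (LINT t:{0..x}|lborel. F 0 * g t + f t * G 0) + (LINT t:{0..x}|lborel. ?Fi t * g t + f t * ?Gi t)"
    using i1 i2 by (rule set_integral_add)
  also have "(LINT t:{0..x}|lborel. F 0 * g t + f t * G 0) = F 0 * ?Gi x + ?Fi x * G 0"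
    using f g by (subst set_integral_add) auto
  also have "(LINT t:{0..x}|lborel. ?Fi t * g t + f t * ?Gi t) = ?Fi x * ?Gi x"
    using I by (subst set_integral_add) auto
  also have "F 0 * ?Gi x + ?Fi x * G 0 + ?Fi x * ?Gi x = F x * G x - F 0 * G 0"
  proof -
    have a: "F x = F 0 + ?Fi x" "G x = G 0 + ?Gi x" using FF[of x] GG[of x] x by auto
    show ?thesis unfolding a by (simp add: algebra_simps)
  qed
  finally show "(LINT t:{0..x}|lborel. F t * g t + f t * G t) = F x * G x - F 0 * G 0" .
qed

lemma solvesD:
  assumes "solves V z u u'" "0 \<le> x"
  shows "set_integrable lborel {0..x} u'" "set_integrable lborel {0..x} (\<lambda>t. (V t - z) * u t)"
    "u x = u 0 + (LINT t:{0..x}|lborel. u' t)" "u' x = u' 0 + (LINT t:{0..x}|lborel. (V t - z) * u t)"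
  using assms unfolding solves_def by blast+

lemma wronsk:
  assumes su: "solves V1 z1 u u'" and sv: "solves V2 z2 v v'" and x: "0 \<le> x"
  shows "set_integrable lborel {0..x} (\<lambda>t. u t * ((V2 t - z2) * v t) - ((V1 t - z1) * u t) * v t)"
    and "u x * v' x - u' x * v x = u 0 * v' 0 - u' 0 * v 0
          + (LINT t:{0..x}|lborel. u t * ((V2 t - z2) * v t) - ((V1 t - z1) * u t) * v t)"
proof -
  have su3: "\<And>t. t \<in> {0..x} \<Longrightarrow> u t = u 0 + (LINT s:{0..t}|lborel. u' s)"
    by (rule solvesD(3)[OF su]) auto
  have su4: "\<And>t. t \<in> {0..x} \<Longrightarrow> u' t = u' 0 + (LINT s:{0..t}|lborel. (V1 s - z1) * u s)"
    by (rule solvesD(4)[OF su]) auto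
  have sv3: "\<And>t. t \<in> {0..x} \<Longrightarrow> v t = v 0 + (LINT s:{0..t}|lborel. v' s)"
    by (rule solvesD(3)[OF sv]) auto
  have sv4: "\<And>t. t \<in> {0..x} \<Longrightarrow> v' t = v' 0 + (LINT s:{0..t}|lborel. (V2 s - z2) * v s)"
    by (rule solvesD(4)[OF sv]) auto
  note IA = ibp[of x u' "\<lambda>t. (V2 t - z2) * v t" u v', OF solvesD(1)[OF su x] solvesD(2)[OF sv x] su3 sv4 x]
  note IB = ibp[of x "\<lambda>t. (V1 t - z1) * u t" v' u' v, OF solvesD(2)[OF su x] solvesD(1)[OF sv x] su4 sv3 x]
  have A1: "set_integrable lborel {0..x} (\<lambda>t. u t * ((V2 t - z2) * v t) + u' t * v' t)"
   and A2: "(LINT t:{0..x}|lborel. u t * ((V2 t - z2) * v t) + u' t * v' t) = u x * v' x - u 0 * v' 0"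
    using IA by blast+
  have B1: "set_integrable lborel {0..x} (\<lambda>t. u' t * v' t + ((V1 t - z1) * u t) * v t)"
   and B2: "(LINT t:{0..x}|lborel. u' t * v' t + ((V1 t - z1) * u t) * v t) = u' x * v x - u' 0 * v 0"
    using IB by blast+
  have eq: "(\<lambda>t. u t * ((V2 t - z2) * v t) - ((V1 t - z1) * u t) * v t)
     = (\<lambda>t. (u t * ((V2 t - z2) * v t) + u' t * v' t) - (u' t * v' t + ((V1 t - z1) * u t) * v t))"
    by (simp add: fun_eq_iff algebra_simps)
  show "set_integrable lborel {0..x} (\<lambda>t. u t * ((V2 t - z2) * v t) - ((V1 t - z1) * u t) * v t)"
    unfolding eq using A1 B1 by (rule set_integral_diff)
  have "(LINT t:{0..x}|lborel. u t * ((V2 t - z2) * v t) - ((V1 t - z1) * u t) * v t)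
     = (u x * v' x - u 0 * v' 0) - (u' x * v x - u' 0 * v 0)"
    unfolding eq A2[symmetric] B2[symmetric] using A1 B1 by (rule set_integral_diff)
  then show "u x * v' x - u' x * v x = u 0 * v' 0 - u' 0 * v 0
          + (LINT t:{0..x}|lborel. u t * ((V2 t - z2) * v t) - ((V1 t - z1) * u t) * v t)"
    by (simp only: algebra_simps)
qed

lemma wronsk_same:
  assumes su: "solves V z u u'" and sv: "solves V z v v'" and x: "0 \<le> x"
  shows "u x * v' x - u' x * v x = u 0 * v' 0 - u' 0 * v 0"
proof -
  have "(\<lambda>t. u t * ((V t - z) * v t) - ((V t - z) * u t) * v t) = (\<lambda>t. 0)"
    by (simp add: fun_eq_iff algebra_simps)
  then show ?thesis using wronsk(2)[OF su sv x] by (simp only: set_lebesgue_integral_zero) simp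
qed



lemma notL2:
  fixes f :: "real \<Rightarrow> real"
  assumes int: "set_integrable lborel {0..} f" and ev: "X \<ge> 0" "\<And>x. x \<ge> X \<Longrightarrow> f x \<ge> 1"
  shows False
proof -
  have "(\<integral>\<^sup>+ x. ennreal (norm (indicator {0..} x *\<^sub>R f x)) \<partial>lborel) < \<infinity>"
    using int unfolding set_integrable_def integrable_iff_bounded by blast
  then obtain B where B: "(\<integral>\<^sup>+ x. ennreal (norm (indicator {0..} x *\<^sub>R f x)) \<partial>lborel) = ennreal B" "B \<ge> 0"
    using less_top ennreal_cases  by (metis infinity_ennreal_def not_less_iff_gr_or_eq)
  obtain n :: nat where n: "real n > B" using reals_Archimedean2 by blast
  have "ennreal (real n) = (\<integral>\<^sup>+ x. indicator {X..X + real n} x \<partial>lborel)"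
    by simp
  also have "\<dots> \<le> (\<integral>\<^sup>+ x. ennreal (norm (indicator {0..} x *\<^sub>R f x)) \<partial>lborel)"
  proof (rule nn_integral_mono)
    fix x
    show "indicator {X..X + real n} x \<le> ennreal (norm (indicator {0..} x *\<^sub>R f x))"
    proof (cases "x \<in> {X..X + real n}")
      case True
      then have "x \<ge> X" "x \<ge> 0" using ev by auto
      then have "norm (indicator {0..} x *\<^sub>R f x) \<ge> 1" using ev(2)[of x] by simp
      then show ?thesis using True by (simp add: indicator_def)
    next
      case False then show ?thesis by simp
    qed
  qed
  finally show False using B n by (simp add: ennreal_le_iff2)
qed

lemma set_integral_split:
  fixes H A B :: "real \<Rightarrow> complex"
  assumes A: "set_integrable lborel {0..x} A" and B: "set_integrable lborel {0..x} B"
    and H: "\<And>t. t \<in> {0..x} \<Longrightarrow> H t = (if t \<le> R then A t else B t)"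
    and R: "0 \<le> R" "R \<le> x"
  shows "set_integrable lborel {0..x} H"
    and "(LINT t:{0..x}|lborel. H t) = (LINT t:{0..R}|lborel. A t) + ((LINT t:{0..x}|lborel. B t) - (LINT t:{0..R}|lborel. B t))"
proof -
  have un: "{0..x} = {0..R} \<union> {R<..x}" using R by auto
  have dis: "{0..R} \<inter> {R<..x} = {}" by auto
  have A1: "set_integrable lborel {0..R} A" by (rule set_integrable_subset[OF A]) (use R in auto)
  have B1: "set_integrable lborel {0..R} B" by (rule set_integrable_subset[OF B]) (use R in auto)
  have B2: "set_integrable lborel {R<..x} B" by (rule set_integrable_subset[OF B]) (use R in auto)
  have H1: "set_integrable lborel {0..R} H"
    by (rule set_integrable_cong[THEN iffD2, OF refl refl _ A1]) (use H R in auto)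
  have H2: "set_integrable lborel {R<..x} H"
    by (rule set_integrable_cong[THEN iffD2, OF refl refl _ B2]) (use H R in auto)
  show "set_integrable lborel {0..x} H"
    unfolding un by (rule set_integrable_Un[OF H1 H2]) auto
  have "(LINT t:{0..x}|lborel. H t) = (LINT t:{0..R}|lborel. H t) + (LINT t:{R<..x}|lborel. H t)"
    unfolding un by (rule set_integral_Un[OF dis H1 H2])
  also have "(LINT t:{0..R}|lborel. H t) = (LINT t:{0..R}|lborel. A t)"
    by (rule set_lebesgue_integral_cong) (use H R in auto)
  also have "(LINT t:{R<..x}|lborel. H t) = (LINT t:{R<..x}|lborel. B t)"
    by (rule set_lebesgue_integral_cong) (use H R in auto)
  also have "(LINT t:{R<..x}|lborel. B t) = (LINT t:{0..x}|lborel. B t) - (LINT t:{0..R}|lborel. B t)"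
    unfolding un by (subst set_integral_Un[OF dis B1 B2]) simp
  finally show "(LINT t:{0..x}|lborel. H t) = (LINT t:{0..R}|lborel. A t) + ((LINT t:{0..x}|lborel. B t) - (LINT t:{0..R}|lborel. B t))" .
qed

lemma solvesI:
  assumes "\<And>x. x \<ge> 0 \<Longrightarrow> set_integrable lborel {0..x} u'"
    "\<And>x. x \<ge> 0 \<Longrightarrow> set_integrable lborel {0..x} (\<lambda>t. (V t - z) * u t)"
    "\<And>x. x \<ge> 0 \<Longrightarrow> u x = u 0 + (LINT t:{0..x}|lborel. u' t)"
    "\<And>x. x \<ge> 0 \<Longrightarrow> u' x = u' 0 + (LINT t:{0..x}|lborel. (V t - z) * u t)"
  shows "solves V z u u'"
  using assms unfolding solves_def by blast

lemma solves_glue: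
  assumes sf: "solves V1 z1 f f'" and sg: "solves V2 z2 g g'" and R: "0 \<le> R"
    and m0: "f R = g R" and m1: "f' R = g' R"
    and V1: "\<And>t. t \<in> {0..R} \<Longrightarrow> V t - z = V1 t - z1"
    and V2: "\<And>t. t > R \<Longrightarrow> V t - z = V2 t - z2"
  shows "solves V z (\<lambda>x. if x \<le> R then f x else g x) (\<lambda>x. if x \<le> R then f' x else g' x)"
proof (rule solvesI)
  fix x :: real assume x: "x \<ge> 0"
  let ?h = "\<lambda>x. if x \<le> R then f x else g x"
  let ?h' = "\<lambda>x. if x \<le> R then f' x else g' x"
  have "set_integrable lborel {0..x} ?h' \<and> set_integrable lborel {0..x} (\<lambda>t. (V t - z) * ?h t)
     \<and> ?h x = ?h 0 + (LINT t:{0..x}|lborel. ?h' t)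
     \<and> ?h' x = ?h' 0 + (LINT t:{0..x}|lborel. (V t - z) * ?h t)"
  proof (cases "x \<le> R")
    case True
    have c1: "set_integrable lborel {0..x} ?h' = set_integrable lborel {0..x} f'"
      by (rule set_integrable_cong) (use True in auto)
    have c2: "set_integrable lborel {0..x} (\<lambda>t. (V t - z) * ?h t) = set_integrable lborel {0..x} (\<lambda>t. (V1 t - z1) * f t)"
      by (rule set_integrable_cong) (use True V1 in auto)
    have c3: "(LINT t:{0..x}|lborel. ?h' t) = (LINT t:{0..x}|lborel. f' t)"
      by (rule set_lebesgue_integral_cong) (use True in auto)
    have c4: "(LINT t:{0..x}|lborel. (V t - z) * ?h t) = (LINT t:{0..x}|lborel. (V1 t - z1) * f t)"
      by (rule set_lebesgue_integral_cong) (use True V1 in auto)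
    show ?thesis unfolding c1 c2 c3 c4 using solvesD[OF sf x] True R by simp
  next
    case False
    note S1 = set_integral_split[of x f' g' ?h' R, OF solvesD(1)[OF sf x] solvesD(1)[OF sg x] _ R]
    note S2 = set_integral_split[of x "\<lambda>t. (V1 t - z1) * f t" "\<lambda>t. (V2 t - z2) * g t" "\<lambda>t. (V t - z) * ?h t" R,
         OF solvesD(2)[OF sf x] solvesD(2)[OF sg x] _ R]
    have p1: "\<And>t. t \<in> {0..x} \<Longrightarrow> ?h' t = (if t \<le> R then f' t else g' t)" by simp
    have p2: "\<And>t. t \<in> {0..x} \<Longrightarrow> (V t - z) * ?h t = (if t \<le> R then (V1 t - z1) * f t else (V2 t - z2) * g t)"
      using V1 V2 by auto
    have xR: "R \<le> x" using False by simp
    note S1' = S1[OF p1 xR] and S2' = S2[OF p2 xR]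
    have e: "?h x = g x" "?h 0 = f 0" "?h' x = g' x" "?h' 0 = f' 0" using False R by auto
    have "?h x = ?h 0 + (LINT t:{0..x}|lborel. ?h' t)"
      unfolding e(1,2)
      using S1'(2) solvesD(3)[OF sf R] solvesD(3)[OF sg x] solvesD(3)[OF sg R] m0
      by algebra
    moreover have "?h' x = ?h' 0 + (LINT t:{0..x}|lborel. (V t - z) * ?h t)"
      unfolding e(3,4)
      using S2'(2) solvesD(4)[OF sf R] solvesD(4)[OF sg x] solvesD(4)[OF sg R] m1
      by algebra
    ultimately show ?thesis using S1'(1) S2'(1) by blast
  qed
  then show "set_integrable lborel {0..x} ?h'" "set_integrable lborel {0..x} (\<lambda>t. (V t - z) * ?h t)"
     "?h x = ?h 0 + (LINT t:{0..x}|lborel. ?h' t)" "?h' x = ?h' 0 + (LINT t:{0..x}|lborel. (V t - z) * ?h t)"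
    by blast+
qed



lemma indef_cont:
  fixes u u' :: "real \<Rightarrow> complex"
  assumes I: "\<And>x. x \<ge> 0 \<Longrightarrow> set_integrable lborel {0..x} u'"
    and E: "\<And>x. x \<ge> 0 \<Longrightarrow> u x = u 0 + (LINT t:{0..x}|lborel. u' t)"
  shows "continuous_on {0..} u"
proof -
  have loc: "continuous_on {0..X} u" if X: "X \<ge> 0" for X
  proof -
    have "u' integrable_on {0..X}" using set_borel_integral_eq_integral(1)[OF I[OF X]] .
    then have c: "continuous_on {0..X} (\<lambda>x. integral {0..x} u')"
      by (rule indefinite_integral_continuous_1)
    have "continuous_on {0..X} (\<lambda>x. u 0 + integral {0..x} u')"
      by (intro continuous_intros c)
    moreover have "u x = u 0 + integral {0..x} u'" if "x \<in> {0..X}" for x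
      using E[of x] set_borel_integral_eq_integral(2)[OF I[of x]] that by auto
    ultimately show ?thesis using continuous_on_cong by (metis (no_types, lifting))
  qed
  show ?thesis
    unfolding continuous_on_def
  proof
    fix x :: real assume x: "x \<in> {0..}"
    have "(u \<longlongrightarrow> u x) (at x within {0..x+1})"
      using loc[of "x+1"] x unfolding continuous_on_def by auto
    moreover have "at x within {0..x+1} = at x within {0..}"
      by (rule at_within_nhd[where S="{..<x+1}"]) auto
    ultimately show "(u \<longlongrightarrow> u x) (at x within {0..})" by simp
  qed
qed

lemma solves_cont:
  assumes "solves V z u u'"
  shows "continuous_on {0..} u" "continuous_on {0..} u'"
proof -
  show "continuous_on {0..} u"
    by (rule indef_cont[of u' u]) (rule solvesD[OF assms], simp)+
  show "continuous_on {0..} u'"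
    by (rule indef_cont[of "\<lambda>t. (V t - z) * u t" u']) (rule solvesD[OF assms], simp)+
qed

lemma solves_lin:
  assumes f: "solves V z f f'" and g: "solves V z g g'"
  shows "solves V z (\<lambda>x. a * f x + b * g x) (\<lambda>x. a * f' x + b * g' x)"
  unfolding solves_def
proof (intro allI impI conjI)
  fix x :: real assume x: "0 \<le> x"
  note F = solvesD[OF f x] and G = solvesD[OF g x]
  show i1: "set_integrable lborel {0..x} (\<lambda>x. a * f' x + b * g' x)"
    using F(1) G(1) by (intro set_integral_add) auto
  have eqf: "(\<lambda>t. (V t - z) * (a * f t + b * g t)) = (\<lambda>t. a * ((V t - z) * f t) + b * ((V t - z) * g t))"
    by (simp add: fun_eq_iff algebra_simps)
  show i2: "set_integrable lborel {0..x} (\<lambda>t. (V t - z) * (a * f t + b * g t))"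
    unfolding eqf using F(2) G(2) by (intro set_integral_add) auto
  have L: "(LINT t:{0..x}|lborel. a * ((V t - z) * f t) + b * ((V t - z) * g t))
      = a * (LINT t:{0..x}|lborel. (V t - z) * f t) + b * (LINT t:{0..x}|lborel. (V t - z) * g t)"
    by (subst set_integral_add(2)) (use F(2) G(2) in auto)
  show "a * f' x + b * g' x = a * f' 0 + b * g' 0 + (LINT t:{0..x}|lborel. (V t - z) * (a * f t + b * g t))"
    unfolding eqf using L F(4) G(4) by algebra
  show "a * f x + b * g x = a * f 0 + b * g 0 + (LINT t:{0..x}|lborel. a * f' t + b * g' t)"
    using F(1,3) G(1,3) by (simp add: set_integral_add algebra_simps)
qed

lemma exp_L1:
  fixes a R :: real
  assumes "a > 0"
  shows "set_integrable lborel {R..} (\<lambda>x. exp (- a * x))"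
proof -
  have "(\<lambda>x. exp (-a*x)) integrable_on {R..}" using integrable_on_exp_minus_to_infinity[OF assms] .
  then have "(\<lambda>x. exp (-a*x)) absolutely_integrable_on {R..}"
    by (rule nonnegative_absolutely_integrable_1) auto
  then have "integrable lebesgue (\<lambda>x. indicator {R..} x *\<^sub>R exp (-a*x))"
    unfolding set_integrable_def .
  moreover have "(\<lambda>x. indicator {R..} x *\<^sub>R exp (-a*x)) \<in> borel_measurable lborel" by measurable
  ultimately show ?thesis unfolding set_integrable_def
    using integrable_completion by blast
qed



lemma nonneg_axis_iff: "z \<in> nonneg_axis \<longleftrightarrow> Im z = 0 \<and> Re z \<ge> 0"
proof
  assume "z \<in> nonneg_axis" then show "Im z = 0 \<and> Re z \<ge> 0" unfolding nonneg_axis_def by auto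
next
  assume a: "Im z = 0 \<and> Re z \<ge> 0"
  then have "z = complex_of_real (Re z)" by (simp add: complex_eq_iff)
  then show "z \<in> nonneg_axis" unfolding nonneg_axis_def using a by auto
qed

lemma nonneg_axis_neg: "z \<in> nonneg_axis \<longleftrightarrow> - z \<in> \<real>\<^sub>\<le>\<^sub>0"
  by (auto simp: nonneg_axis_iff complex_nonpos_Reals_iff)

lemma closed_nonneg_axis: "closed nonneg_axis"
proof -
  have "nonneg_axis = {z. 0 \<le> Re z} \<inter> {z. Im z = 0}"
    by (auto simp: nonneg_axis_iff)
  moreover have "closed {z. 0 \<le> Re z}" using closed_halfspace_Re_ge[of 0] by (simp add: atLeast_def)
  moreover have "closed {z::complex. Im z = 0}"
    by (rule closed_Collect_eq) (auto intro: continuous_intros)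
  ultimately show ?thesis by (metis closed_Int)
qed

lemma csqrt_up_off: "z \<notin> nonneg_axis \<Longrightarrow> csqrt_up z = \<i> * csqrt (- z)"
  unfolding csqrt_up_def by (subst if_not_P) (auto simp: nonneg_axis_iff)

lemma Im_csqrt_up_pos: "z \<notin> nonneg_axis \<Longrightarrow> Im (csqrt_up z) > 0"
proof -
  assume z: "z \<notin> nonneg_axis"
  have "Re (csqrt (- z)) > 0"
  proof (rule ccontr)
    assume "\<not> Re (csqrt (- z)) > 0"
    then have re: "Re (csqrt (- z)) = 0" using Re_csqrt[of "-z"] by linarith
    define y where "y = Im (csqrt (- z))"
    have w: "csqrt (- z) = \<i> * complex_of_real y" using re by (simp add: complex_eq_iff y_def)
    have "- z = (csqrt (- z))\<^sup>2" by simp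
    also have "\<dots> = - complex_of_real (y\<^sup>2)" unfolding w by (simp add: power_mult_distrib)
    finally have "z = complex_of_real (y\<^sup>2)" by (metis minus_minus)
    then show False using z by (auto simp: nonneg_axis_iff)
  qed
  then show ?thesis using z by (simp add: csqrt_up_off)
qed

lemma norm_csqrt_up: "cmod (csqrt_up z) = sqrt (cmod z)"
proof (cases "Im z = 0 \<and> Re z \<ge> 0")
  case True
  then have "cmod z = \<bar>Re z\<bar>" by (simp add: cmod_eq_Re)
  then have "cmod z = Re z" using True by simp
  then show ?thesis unfolding csqrt_up_def by (subst if_P) (use True in auto)
next
  case False
  then show ?thesis unfolding csqrt_up_def by (subst if_not_P) (auto simp: norm_mult)
qed

lemma csqrt_up_nz: "z \<noteq> 0 \<Longrightarrow> csqrt_up z \<noteq> 0"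
  using norm_csqrt_up[of z] by auto

lemma holo_csqrt_up: "csqrt_up holomorphic_on (- nonneg_axis)"
proof -
  have "(\<lambda>z. \<i> * csqrt (- z)) holomorphic_on (- nonneg_axis)"
    by (intro holomorphic_intros) (auto simp: nonneg_axis_neg)
  then show ?thesis
    by (rule holomorphic_transform) (simp add: csqrt_up_off)
qed

lemma analytic_part:
  fixes Ep Em Edp Edm :: "real \<Rightarrow> complex \<Rightarrow> complex" and \<gamma> R :: real
  assumes anal: "\<And>x. x \<ge> 0 \<Longrightarrow>
                 (Ep x) analytic_on (- nonneg_axis) \<and> (Em x) analytic_on (- nonneg_axis)
               \<and> (Edp x) analytic_on (- nonneg_axis) \<and> (Edm x) analytic_on (- nonneg_axis)"
    and R: "R > 0"
  shows "let S = - (nonneg_axis \<union> (\<lambda>z. \<i> * complex_of_real \<gamma> + z) ` nonneg_axis) in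
             (fR Ep Em Edp Edm \<gamma> R) analytic_on S
           \<and> (calE1 Ep Edp \<gamma> R) analytic_on S
           \<and> (calE2 Ep Em Edp Edm \<gamma> R) analytic_on S"
proof -
  define S where "S = - (nonneg_axis \<union> (\<lambda>z. \<i> * complex_of_real \<gamma> + z) ` nonneg_axis)"
  have oS: "open S" unfolding S_def
    by (intro open_Compl closed_Un closed_nonneg_axis closed_translation)
  have S1: "S \<subseteq> - nonneg_axis" unfolding S_def by auto
  have S2: "(\<lambda>lam. lam - \<i> * complex_of_real \<gamma>) ` S \<subseteq> - nonneg_axis"
  proof
    fix w assume "w \<in> (\<lambda>lam. lam - \<i> * complex_of_real \<gamma>) ` S"
    then obtain lam where lam: "lam \<in> S" "w = lam - \<i> * complex_of_real \<gamma>" by auto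
    show "w \<in> - nonneg_axis"
    proof
      assume "w \<in> nonneg_axis"
      then have "lam \<in> (\<lambda>z. \<i> * complex_of_real \<gamma> + z) ` nonneg_axis"
        using lam by (auto simp: image_iff intro!: bexI[of _ w])
      then show False using lam(1) unfolding S_def by auto
    qed
  qed
  have sh: "(\<lambda>lam. g (lam - \<i> * complex_of_real \<gamma>)) holomorphic_on S"
    if "g holomorphic_on (- nonneg_axis)" for g
  proof -
    have d: "(\<lambda>lam. lam - \<i> * complex_of_real \<gamma>) holomorphic_on S" by (intro holomorphic_intros)
    have "(g \<circ> (\<lambda>lam. lam - \<i> * complex_of_real \<gamma>)) holomorphic_on S"
      by (rule holomorphic_on_compose_gen[OF d that S2])
    then show ?thesis by (simp add: o_def)
  qed
  have un: "(\<lambda>lam. g lam) holomorphic_on S" if "g holomorphic_on (- nonneg_axis)" for g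
    using holomorphic_on_subset[OF that S1] by simp
  have AR: "Ep R holomorphic_on (- nonneg_axis)" "Em R holomorphic_on (- nonneg_axis)"
     "Edp R holomorphic_on (- nonneg_axis)" "Edm R holomorphic_on (- nonneg_axis)"
     "Em 0 holomorphic_on (- nonneg_axis)" "Ep 0 holomorphic_on (- nonneg_axis)"
    using anal[of R] anal[of 0] R by (auto intro: analytic_imp_holomorphic)
  note H = sh[OF AR(1)] sh[OF AR(2)] sh[OF AR(3)] sh[OF AR(4)] sh[OF AR(5)] sh[OF AR(6)]
     un[OF AR(1)] un[OF AR(2)] un[OF AR(3)] un[OF AR(4)] sh[OF holo_csqrt_up] un[OF holo_csqrt_up]
  have h1: "calE1 Ep Edp \<gamma> R holomorphic_on S"
    unfolding calE1_def Let_def by (intro holomorphic_intros H)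
  have h2: "calE2 Ep Em Edp Edm \<gamma> R holomorphic_on S"
    unfolding calE2_def Let_def by (intro holomorphic_intros H)
  have h1': "(\<lambda>lam. calE1 Ep Edp \<gamma> R lam) holomorphic_on S" using h1 by simp
  have h2': "(\<lambda>lam. calE2 Ep Em Edp Edm \<gamma> R lam) holomorphic_on S" using h2 by simp
  have h3: "fR Ep Em Edp Edm \<gamma> R holomorphic_on S"
    unfolding fR_def Let_def psi_m_def psi_p_def by (intro holomorphic_intros H h1' h2')
  show ?thesis unfolding S_def[symmetric] Let_def
    using h1 h2 h3 oS by (simp add: analytic_on_open)
qed

lemma one_bound:
  fixes X :: complex and a b c K :: real
  assumes X: "cmod X \<le> K / a" and w: "cmod w \<le> c * a" and a: "a \<ge> 1" and K: "K \<ge> 0" and c: "c \<ge> 0"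
  shows "cmod (w * X) \<le> c * K"
proof -
  have "a * cmod X \<le> K" using X a by (simp add: pos_le_divide_eq mult.commute)
  have "cmod (w * X) = cmod w * cmod X" by (simp add: norm_mult)
  also have "\<dots> \<le> (c * a) * cmod X" by (rule mult_right_mono[OF w]) simp
  also have "\<dots> = c * (a * cmod X)" by simp
  also have "\<dots> \<le> c * K" by (rule mult_left_mono[OF \<open>a * cmod X \<le> K\<close> c])
  finally show ?thesis .
qed

lemma term_bound:
  fixes w X Y :: complex and a b c K :: real
  assumes X: "cmod X \<le> K / a" and Y: "cmod Y \<le> K / b"
    and wa: "cmod w \<le> c * a" and wb: "cmod w \<le> c * b"
    and a: "a \<ge> 1" and b: "b \<ge> 1" and K: "K \<ge> 0" and c: "c \<ge> 0"
  shows "cmod (w * (X + Y + X * Y)) \<le> 2 * c * K + c * K * K"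
proof -
  have 1: "cmod (w * X) \<le> c * K" by (rule one_bound[OF X wa a K c])
  have 2: "cmod (w * Y) \<le> c * K" by (rule one_bound[OF Y wb b K c])
  have Yk: "cmod Y \<le> K"
  proof -
    have "K / b \<le> K / 1" by (rule divide_left_mono) (use b K in auto)
    then show ?thesis using Y by linarith
  qed
  have 3: "cmod (w * X * Y) \<le> c * K * K"
  proof -
    have "cmod (w * X * Y) = cmod (w * X) * cmod Y" by (simp add: norm_mult)
    also have "\<dots> \<le> (c * K) * K" by (rule mult_mono[OF 1 Yk]) (use c K in auto)
    finally show ?thesis by simp
  qed
  have "cmod (w * (X + Y + X * Y)) \<le> cmod (w * X) + cmod (w * Y) + cmod (w * X * Y)"
    by (metis (no_types, lifting) distrib_left mult.assoc norm_triangle_le add_mono order_refl)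
  then show ?thesis using 1 2 3 by linarith
qed

lemma bound_part:
  fixes Ep Em Edp Edm :: "real \<Rightarrow> complex \<Rightarrow> complex" and \<gamma> :: real
  assumes gamma_pos: "\<gamma> > 0"
    and bound: "\<exists>C. \<forall>x\<ge>0. \<forall>lam. cmod lam \<ge> 1 \<longrightarrow>
                  cmod (Ep x lam) + cmod (Edp x lam) \<le> C / sqrt (cmod lam)
                \<and> cmod (Em x lam) + cmod (Edm x lam) \<le> C / sqrt (cmod lam)"
  shows "\<exists>C1>0. \<forall>R>0. \<forall>lam. cmod lam \<ge> 1 + \<gamma> \<longrightarrow>
             cmod (calE1 Ep Edp \<gamma> R lam) + cmod (calE2 Ep Em Edp Edm \<gamma> R lam) \<le> C1"
proof -
  obtain C where C: "\<And>x lam. x \<ge> 0 \<Longrightarrow> cmod lam \<ge> 1 \<Longrightarrow>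
                  cmod (Ep x lam) + cmod (Edp x lam) \<le> C / sqrt (cmod lam)
                \<and> cmod (Em x lam) + cmod (Edm x lam) \<le> C / sqrt (cmod lam)"
    using bound by blast
  define K where "K = max C 0"
  define c where "c = 1 + \<gamma>"
  have K: "K \<ge> 0" and c: "c \<ge> 0" "c \<ge> 1" using gamma_pos by (auto simp: K_def c_def)
  define B where "B = 2 * c * K + c * K * K"
  have B: "B \<ge> 0" using K c by (simp add: B_def)
  show ?thesis
  proof (intro exI[of _ "4 * B + 1"] conjI allI impI)
    show "0 < 4 * B + 1" using B by simp
    fix R :: real and lam :: complex
    assume R: "R > 0" and lam: "cmod lam \<ge> 1 + \<gamma>"
    define \<mu> where "\<mu> = lam - \<i> * complex_of_real \<gamma>"
    have ng: "cmod (\<i> * complex_of_real \<gamma>) = \<gamma>" using gamma_pos by (simp add: norm_mult)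
    have mu1: "cmod \<mu> \<le> cmod lam + \<gamma>" and mu2: "cmod lam \<le> cmod \<mu> + \<gamma>"
      unfolding \<mu>_def using norm_triangle_ineq4[of lam "\<i> * complex_of_real \<gamma>"]
        norm_triangle_ineq[of "lam - \<i> * complex_of_real \<gamma>" "\<i> * complex_of_real \<gamma>"] ng by auto
    have l1: "cmod lam \<ge> 1" and m1: "cmod \<mu> \<ge> 1" using lam mu2 gamma_pos by auto
    define a where "a = sqrt (cmod lam)"
    define b where "b = sqrt (cmod \<mu>)"
    have a1: "a \<ge> 1" and b1: "b \<ge> 1" using l1 m1 by (auto simp: a_def b_def)
    have na: "cmod (csqrt_up lam) = a" and nb: "cmod (csqrt_up \<mu>) = b"
      by (simp_all add: a_def b_def norm_csqrt_up)
    have lm: "cmod lam \<le> c\<^sup>2 * cmod \<mu>"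
    proof -
      have "cmod lam \<le> cmod \<mu> + \<gamma> * cmod \<mu>" using mu2 m1 gamma_pos
        by (smt (verit) mult_le_cancel_left1)
      also have "\<dots> = c * cmod \<mu>" by (simp add: c_def algebra_simps)
      also have "\<dots> \<le> c\<^sup>2 * cmod \<mu>" using c by (simp add: power2_eq_square mult_right_mono)
      finally show ?thesis .
    qed
    have ml: "cmod \<mu> \<le> c\<^sup>2 * cmod lam"
    proof -
      have "cmod \<mu> \<le> cmod lam + \<gamma> * cmod lam" using mu1 l1 gamma_pos
        by (smt (verit) mult_le_cancel_left1)
      also have "\<dots> = c * cmod lam" by (simp add: c_def algebra_simps)
      also have "\<dots> \<le> c\<^sup>2 * cmod lam" using c by (simp add: power2_eq_square mult_right_mono)
      finally show ?thesis .
    qed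
    have ab: "a \<le> c * b"
    proof -
      have "a \<le> sqrt (c\<^sup>2 * cmod \<mu>)" unfolding a_def using lm by simp
      also have "\<dots> = c * b" using c by (simp add: b_def real_sqrt_mult)
      finally show ?thesis .
    qed
    have ba: "b \<le> c * a"
    proof -
      have "b \<le> sqrt (c\<^sup>2 * cmod lam)" unfolding b_def using ml by simp
      also have "\<dots> = c * a" using c by (simp add: a_def real_sqrt_mult)
      finally show ?thesis .
    qed
    have aa: "a \<le> c * a" and bb: "b \<le> c * b" using a1 b1 c by auto
    have CL: "cmod (Ep R lam) + cmod (Edp R lam) \<le> K / a" "cmod (Em R lam) + cmod (Edm R lam) \<le> K / a"
    proof -
      have "C / sqrt (cmod lam) \<le> K / sqrt (cmod lam)" by (rule divide_right_mono) (auto simp: K_def)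
      then show "cmod (Ep R lam) + cmod (Edp R lam) \<le> K / a" "cmod (Em R lam) + cmod (Edm R lam) \<le> K / a"
        using C[of R lam] R l1 unfolding a_def by auto
    qed
    have CM: "cmod (Ep R \<mu>) + cmod (Edp R \<mu>) \<le> K / b" "cmod (Em R \<mu>) + cmod (Edm R \<mu>) \<le> K / b"
    proof -
      have "C / sqrt (cmod \<mu>) \<le> K / sqrt (cmod \<mu>)" by (rule divide_right_mono) (auto simp: K_def)
      then show "cmod (Ep R \<mu>) + cmod (Edp R \<mu>) \<le> K / b" "cmod (Em R \<mu>) + cmod (Edm R \<mu>) \<le> K / b"
        using C[of R \<mu>] R m1 unfolding b_def by auto
    qed
    have I: "cmod (Ep R lam) \<le> K/a" "cmod (Edp R lam) \<le> K/a" "cmod (Em R lam) \<le> K/a" "cmod (Edm R lam) \<le> K/a"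
      "cmod (Ep R \<mu>) \<le> K/b" "cmod (Edp R \<mu>) \<le> K/b" "cmod (Em R \<mu>) \<le> K/b" "cmod (Edm R \<mu>) \<le> K/b"
      using CL CM norm_ge_zero by (smt (verit))+
    have e1: "cmod (calE1 Ep Edp \<gamma> R lam) \<le> 2 * B"
    proof -
      have t1: "cmod (csqrt_up lam * (Ep R \<mu> + Edp R lam + Ep R \<mu> * Edp R lam)) \<le> B"
        unfolding B_def by (rule term_bound[of _ K b _ a]) (use I na ab aa a1 b1 K c in auto)
      have t2: "cmod (csqrt_up \<mu> * (Edp R \<mu> + Ep R lam + Edp R \<mu> * Ep R lam)) \<le> B"
        unfolding B_def by (rule term_bound[of _ K b _ a]) (use I nb ba bb a1 b1 K c in auto)
      show ?thesis unfolding calE1_def Let_def \<mu>_def[symmetric]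
        using norm_triangle_ineq4 t1 t2 by (smt (verit))
    qed
    have e2: "cmod (calE2 Ep Em Edp Edm \<gamma> R lam) \<le> 2 * B"
    proof -
      have t1: "cmod (csqrt_up lam * (Edp R lam + Em R \<mu> + Edp R lam * Em R \<mu>)) \<le> B"
        unfolding B_def by (rule term_bound[of _ K a _ b]) (use I na ab aa a1 b1 K c in auto)
      have t2: "cmod (csqrt_up \<mu> * (Ep R lam + Edm R \<mu> + Ep R lam * Edm R \<mu>)) \<le> B"
        unfolding B_def by (rule term_bound[of _ K a _ b]) (use I nb ba bb a1 b1 K c in auto)
      show ?thesis unfolding calE2_def Let_def \<mu>_def[symmetric]
        using norm_triangle_ineq t1 t2 by (smt (verit))
    qed
    show "cmod (calE1 Ep Edp \<gamma> R lam) + cmod (calE2 Ep Em Edp Edm \<gamma> R lam) \<le> 4 * B + 1"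
      using e1 e2 by linarith
  qed
qed




lemma fR_wronsk:
  fixes Ep Em Edp Edm :: "real \<Rightarrow> complex \<Rightarrow> complex" and lam :: complex and \<gamma> R :: real
  defines "\<mu> \<equiv> lam - \<i> * complex_of_real \<gamma>"
  shows "(psi_m Em 0 \<mu> * psi_p Ep R \<mu> - psi_p Ep 0 \<mu> * psi_m Em R \<mu>) * dpsi_p Edp R lam
       - (psi_m Em 0 \<mu> * dpsi_p Edp R \<mu> - psi_p Ep 0 \<mu> * dpsi_m Edm R \<mu>) * psi_p Ep R lam
       = \<i> * exp (\<i> * csqrt_up lam * complex_of_real R) * fR Ep Em Edp Edm \<gamma> R lam"
proof -
  define s where "s = csqrt_up lam"
  define m where "m = csqrt_up \<mu>"
  define e where "e = exp (\<i> * s * complex_of_real R)"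
  define e1 where "e1 = exp (\<i> * m * complex_of_real R)"
  define e2 where "e2 = exp (- \<i> * m * complex_of_real R)"
  define A where "A = psi_m Em 0 \<mu>"
  define B where "B = psi_p Ep 0 \<mu>"
  show ?thesis
    unfolding fR_def calE1_def calE2_def Let_def \<mu>_def[symmetric]
    unfolding A_def[symmetric] B_def[symmetric]
    unfolding psi_p_def psi_m_def dpsi_p_def dpsi_m_def
    unfolding s_def[symmetric] m_def[symmetric] e_def[symmetric] e1_def[symmetric] e2_def[symmetric]
    by algebra
qed

lemma exp_cancel: "exp (\<i> * s * complex_of_real x) * exp (- \<i> * s * complex_of_real x) = 1"
  by (simp add: exp_add[symmetric])

lemma lim_split:
  assumes "((\<lambda>x. cmod (E x) + cmod (F x)) \<longlongrightarrow> 0) at_top"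
  shows "(E \<longlongrightarrow> 0) at_top" "(F \<longlongrightarrow> 0) at_top"
proof -
  show "(E \<longlongrightarrow> 0) at_top"
    by (rule Lim_null_comparison[OF _ assms]) auto
  show "(F \<longlongrightarrow> 0) at_top"
    by (rule Lim_null_comparison[OF _ assms]) auto
qed

lemma Wpm:
  fixes Ep Em Edp Edm :: "real \<Rightarrow> complex \<Rightarrow> complex" and q :: "real \<Rightarrow> complex"
  assumes sp: "solves q z (\<lambda>x. psi_p Ep x z) (\<lambda>x. dpsi_p Edp x z)"
    and sm: "solves q z (\<lambda>x. psi_m Em x z) (\<lambda>x. dpsi_m Edm x z)"
    and lp: "((\<lambda>x. cmod (Ep x z) + cmod (Edp x z)) \<longlongrightarrow> 0) at_top"
    and lm: "((\<lambda>x. cmod (Em x z) + cmod (Edm x z)) \<longlongrightarrow> 0) at_top"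
    and x: "x \<ge> 0"
  shows "psi_p Ep x z * dpsi_m Edm x z - dpsi_p Edp x z * psi_m Em x z = - 2 * \<i> * csqrt_up z"
proof -
  define W where "W x = psi_p Ep x z * dpsi_m Edm x z - dpsi_p Edp x z * psi_m Em x z" for x
  have const: "W y = W 0" if "y \<ge> 0" for y
    unfolding W_def using wronsk_same[OF sp sm that] .
  have form: "W y = - \<i> * csqrt_up z * ((1 + Ep y z) * (1 + Edm y z) + (1 + Edp y z) * (1 + Em y z))" for y
  proof -
    have h: "exp (\<i> * csqrt_up z * complex_of_real y) * exp (- \<i> * csqrt_up z * complex_of_real y) = 1"
      by (rule exp_cancel)
    have "W y = - \<i> * csqrt_up z * (exp (\<i> * csqrt_up z * complex_of_real y) * exp (- \<i> * csqrt_up z * complex_of_real y))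
       * ((1 + Ep y z) * (1 + Edm y z) + (1 + Edp y z) * (1 + Em y z))"
      unfolding W_def psi_p_def psi_m_def dpsi_p_def dpsi_m_def by (simp add: algebra_simps)
    then show ?thesis unfolding h by simp
  qed
  note L1 = lim_split[OF lp] and L2 = lim_split[OF lm]
  have e: "- \<i> * csqrt_up z * ((1 + 0) * (1 + 0) + (1 + 0) * (1 + 0)) = - 2 * \<i> * csqrt_up z"
    by simp
  have "((\<lambda>y. W y) \<longlongrightarrow> - \<i> * csqrt_up z * ((1 + 0) * (1 + 0) + (1 + 0) * (1 + 0))) at_top"
    unfolding form by (intro tendsto_intros L1 L2)
  then have lim: "(W \<longlongrightarrow> - 2 * \<i> * csqrt_up z) at_top" unfolding e by simp
  have ev: "eventually (\<lambda>y. W y = W 0) at_top"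
    unfolding eventually_at_top_linorder using const by blast
  have "((\<lambda>y::real. W 0) \<longlongrightarrow> - 2 * \<i> * csqrt_up z) at_top"
    using tendsto_cong[OF ev] lim by blast
  then have "W 0 = - 2 * \<i> * csqrt_up z" by (simp add: tendsto_const_iff)
  then show ?thesis using const[OF x] unfolding W_def by simp
qed

lemma norm_exp_isx: "cmod (exp (\<i> * s * complex_of_real x)) = exp (- Im s * x)"
  by (simp add: norm_exp_eq_Re)

lemma norm_exp_misx: "cmod (exp (- \<i> * s * complex_of_real x)) = exp (Im s * x)"
  by (simp add: norm_exp_eq_Re)

lemma E_bounded:
  fixes E :: "real \<Rightarrow> complex"
  assumes cont: "continuous_on {0..} E" and lim: "(E \<longlongrightarrow> 0) at_top"
  shows "\<exists>B. \<forall>x\<ge>0. cmod (E x) \<le> B"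
proof -
  obtain X where X: "\<And>x. x \<ge> X \<Longrightarrow> cmod (E x) < 1"
    using order_tendstoD(2)[OF tendsto_norm[OF lim], of 1] by (auto simp: eventually_at_top_linorder)
  have "compact (E ` {0..max X 0})"
    by (rule compact_continuous_image[OF continuous_on_subset[OF cont] compact_Icc]) auto
  then obtain B where B: "\<And>y. y \<in> E ` {0..max X 0} \<Longrightarrow> norm y \<le> B"
    using compact_imp_bounded bounded_iff by metis
  show ?thesis
  proof (intro exI[of _ "max B 1"] allI impI)
    fix x :: real assume x: "x \<ge> 0"
    show "cmod (E x) \<le> max B 1"
    proof (cases "x \<le> max X 0")
      case True then show ?thesis using B[of "E x"] x by force
    next
      case False then show ?thesis using X[of x] by force
    qed
  qed
qed

lemma psi_p_contE:
  assumes sp: "solves q z (\<lambda>x. psi_p Ep x z) (\<lambda>x. dpsi_p Edp x z)"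
  shows "continuous_on {0..} (\<lambda>x. Ep x z)"
proof -
  have c: "continuous_on {0..} (\<lambda>x. psi_p Ep x z)" using solves_cont(1)[OF sp] .
  have e: "Ep x z = psi_p Ep x z * exp (- \<i> * csqrt_up z * complex_of_real x) - 1" for x
  proof -
    have h: "exp (\<i> * csqrt_up z * complex_of_real x) * exp (- \<i> * csqrt_up z * complex_of_real x) = 1"
      by (rule exp_cancel)
    have "psi_p Ep x z * exp (- \<i> * csqrt_up z * complex_of_real x)
       = (exp (\<i> * csqrt_up z * complex_of_real x) * exp (- \<i> * csqrt_up z * complex_of_real x)) * (1 + Ep x z)"
      unfolding psi_p_def by (simp add: algebra_simps)
    then show ?thesis unfolding h by simp
  qed
  show ?thesis unfolding e by (intro continuous_intros c)
qed

lemma psi_m_contE: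
  assumes sm: "solves q z (\<lambda>x. psi_m Em x z) (\<lambda>x. dpsi_m Edm x z)"
  shows "continuous_on {0..} (\<lambda>x. Em x z)"
proof -
  have c: "continuous_on {0..} (\<lambda>x. psi_m Em x z)" using solves_cont(1)[OF sm] .
  have e: "Em x z = psi_m Em x z * exp (\<i> * csqrt_up z * complex_of_real x) - 1" for x
  proof -
    have h: "exp (\<i> * csqrt_up z * complex_of_real x) * exp (- \<i> * csqrt_up z * complex_of_real x) = 1"
      by (rule exp_cancel)
    have "psi_m Em x z * exp (\<i> * csqrt_up z * complex_of_real x)
       = (exp (\<i> * csqrt_up z * complex_of_real x) * exp (- \<i> * csqrt_up z * complex_of_real x)) * (1 + Em x z)"
      unfolding psi_m_def by (simp add: algebra_simps)
    then show ?thesis unfolding h by simp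
  qed
  show ?thesis unfolding e by (intro continuous_intros c)
qed

lemma psi_p_decay:
  assumes sp: "solves q z (\<lambda>x. psi_p Ep x z) (\<lambda>x. dpsi_p Edp x z)"
    and lp: "((\<lambda>x. cmod (Ep x z) + cmod (Edp x z)) \<longlongrightarrow> 0) at_top"
  shows "\<exists>M. \<forall>x\<ge>0. cmod (psi_p Ep x z) \<le> M * exp (- Im (csqrt_up z) * x)"
proof -
  obtain B where B: "\<And>x. x \<ge> 0 \<Longrightarrow> cmod (Ep x z) \<le> B"
    using E_bounded[OF psi_p_contE[OF sp] lim_split(1)[OF lp]] by blast
  show ?thesis
  proof (intro exI[of _ "1 + B"] allI impI)
    fix x :: real assume x: "x \<ge> 0"
    have "cmod (psi_p Ep x z) = exp (- Im (csqrt_up z) * x) * cmod (1 + Ep x z)"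
      unfolding psi_p_def norm_mult norm_exp_isx ..
    also have "\<dots> \<le> exp (- Im (csqrt_up z) * x) * (1 + B)"
      by (rule mult_left_mono) (use norm_triangle_ineq[of 1 "Ep x z"] B[OF x] in auto)
    finally show "cmod (psi_p Ep x z) \<le> (1 + B) * exp (- Im (csqrt_up z) * x)" by (simp add: mult.commute)
  qed
qed

lemma L2_tail:
  fixes f :: "real \<Rightarrow> complex"
  assumes cont: "continuous_on {R..} f" and bd: "\<And>x. x \<ge> R \<Longrightarrow> cmod (f x) \<le> M * exp (- c * x)"
    and c: "c > 0"
  shows "set_integrable lborel {R..} (\<lambda>x. (cmod (f x))\<^sup>2)"
proof (rule set_integrable_bound)
  show "set_integrable lborel {R..} (\<lambda>x. M\<^sup>2 * exp (- (2 * c) * x))"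
    using exp_L1[of "2 * c" R] c by auto
  have "continuous_on {R..} (\<lambda>x. (cmod (f x))\<^sup>2)" by (intro continuous_intros cont)
  then have "(\<lambda>x. indicator {R..} x *\<^sub>R (cmod (f x))\<^sup>2) \<in> borel_measurable borel"
    by (rule borel_measurable_continuous_on_indicator[rotated]) auto
  then show "set_borel_measurable lborel {R..} (\<lambda>x. (cmod (f x))\<^sup>2)"
    unfolding set_borel_measurable_def by simp
  show "AE x in lborel. x \<in> {R..} \<longrightarrow> norm ((cmod (f x))\<^sup>2) \<le> norm (M\<^sup>2 * exp (- (2 * c) * x))"
  proof (rule AE_I2, intro impI)
    fix x assume x: "x \<in> {R..}"
    have b: "cmod (f x) \<le> M * exp (- c * x)" using bd x by auto
    have "(cmod (f x))\<^sup>2 \<le> (M * exp (- c * x))\<^sup>2"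
      by (rule power_mono[OF b]) simp
    also have "\<dots> = M\<^sup>2 * exp (- (2 * c) * x)"
      by (simp add: power_mult_distrib power2_eq_square exp_add[symmetric])
    finally show "norm ((cmod (f x))\<^sup>2) \<le> norm (M\<^sup>2 * exp (- (2 * c) * x))" by simp
  qed
qed

lemma grow_contra:
  fixes u :: "real \<Rightarrow> complex"
  assumes L2: "set_integrable lborel {0..} (\<lambda>x. (cmod (u x))\<^sup>2)"
    and dec: "\<And>x. x \<ge> R \<Longrightarrow> u x * w = b * psi_p Ep x z - a * psi_m Em x z"
    and w: "w \<noteq> 0" and a: "a \<noteq> 0" and z: "z \<notin> nonneg_axis" and R: "R \<ge> 0"
    and lp: "((\<lambda>x. cmod (Ep x z) + cmod (Edp x z)) \<longlongrightarrow> 0) at_top"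
    and lm: "((\<lambda>x. cmod (Em x z) + cmod (Edm x z)) \<longlongrightarrow> 0) at_top"
  shows False
proof -
  define c where "c = Im (csqrt_up z)"
  have c: "c > 0" using Im_csqrt_up_pos[OF z] by (simp add: c_def)
  have "eventually (\<lambda>x. cmod (Ep x z) + cmod (Edp x z) < 1/2) at_top"
    using order_tendstoD(2)[OF lp, of "1/2"] by simp
  moreover have "eventually (\<lambda>x. cmod (Em x z) + cmod (Edm x z) < 1/2) at_top"
    using order_tendstoD(2)[OF lm, of "1/2"] by simp
  ultimately have "eventually (\<lambda>x. cmod (Ep x z) + cmod (Edp x z) < 1/2 \<and> cmod (Em x z) + cmod (Edm x z) < 1/2) at_top"
    by (rule eventually_conj)
  then obtain X1 where X1: "\<And>x. x \<ge> X1 \<Longrightarrow> cmod (Ep x z) + cmod (Edp x z) < 1/2 \<and> cmod (Em x z) + cmod (Edm x z) < 1/2"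
    by (auto simp: eventually_at_top_linorder)
  define T where "T = 2 * (cmod w + 3/2 * cmod b) / cmod a"
  define X where "X = max (max X1 R) (max 0 (T / c))"
  have X0: "X \<ge> 0" by (simp add: X_def)
  have big: "(cmod (u x))\<^sup>2 \<ge> 1" if x: "x \<ge> X" for x
  proof -
    have x0: "x \<ge> 0" and xR: "x \<ge> R" and x1: "x \<ge> X1" and xT: "x \<ge> T / c" using x by (auto simp: X_def)
    have Ep: "cmod (Ep x z) \<le> 1/2" and Em: "cmod (Em x z) \<le> 1/2"
      using X1[OF x1] norm_ge_zero[of "Edp x z"] norm_ge_zero[of "Edm x z"] by linarith+
    have pm: "cmod (psi_m Em x z) \<ge> exp (c * x) * (1/2)"
    proof -
      have "cmod (psi_m Em x z) = exp (c * x) * cmod (1 + Em x z)"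
        unfolding psi_m_def norm_mult norm_exp_misx c_def ..
      moreover have "cmod (1 + Em x z) \<ge> 1/2"
        using norm_triangle_ineq2[of 1 "- Em x z"] Em by simp
      ultimately show ?thesis by (simp add: mult_left_mono)
    qed
    have pp: "cmod (psi_p Ep x z) \<le> 3/2"
    proof -
      have "cmod (psi_p Ep x z) = exp (- c * x) * cmod (1 + Ep x z)"
        unfolding psi_p_def norm_mult norm_exp_isx c_def ..
      moreover have "cmod (1 + Ep x z) \<le> 3/2"
        using norm_triangle_ineq[of 1 "Ep x z"] Ep by simp
      moreover have "exp (- c * x) \<le> 1" using c x0 by simp
      ultimately show ?thesis
        using mult_mono[of "exp (- c * x)" 1 "cmod (1 + Ep x z)" "3/2"] by simp
    qed
    have ex: "exp (c * x) \<ge> T"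
    proof -
      have "T \<le> c * x" using xT c by (simp add: pos_divide_le_eq mult.commute)
      also have "c * x \<le> 1 + c * x" by simp
      also have "\<dots> \<le> exp (c * x)" by (rule exp_ge_add_one_self)
      finally show ?thesis .
    qed
    have "cmod a * (exp (c * x) * (1/2)) - cmod b * (3/2) \<le> cmod (a * psi_m Em x z) - cmod (b * psi_p Ep x z)"
      unfolding norm_mult using pm pp
      by (smt (verit, best) mult_left_mono norm_ge_zero)
    also have "\<dots> \<le> cmod (b * psi_p Ep x z - a * psi_m Em x z)"
      using norm_triangle_ineq2[of "a * psi_m Em x z" "b * psi_p Ep x z"] by (simp add: norm_minus_commute)
    also have "\<dots> = cmod (u x) * cmod w" unfolding dec[OF xR, symmetric] by (simp add: norm_mult)
    finally have i1: "cmod a * (exp (c * x) * (1/2)) - cmod b * (3/2) \<le> cmod (u x) * cmod w" .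
    have "cmod a * (T * (1/2)) \<le> cmod a * (exp (c * x) * (1/2))"
      using ex by (simp add: mult_left_mono)
    moreover have "cmod a * (T * (1/2)) = cmod w + 3/2 * cmod b" using a by (simp add: T_def)
    ultimately have "cmod w \<le> cmod (u x) * cmod w" using i1 by linarith
    then have "1 \<le> cmod (u x)" using w by simp
    then show ?thesis by (simp add: one_le_power)
  qed
  show False by (rule notL2[OF L2 X0 big])
qed



lemma decomp1: "(u::complex) * (p * m' - p' * m) = (u * m' - u' * m) * p - (u * p' - u' * p) * m"
  by (simp add: algebra_simps)
lemma decomp2: "(u'::complex) * (p * m' - p' * m) = (u * m' - u' * m) * p' - (u * p' - u' * p) * m'"
  by (simp add: algebra_simps)

lemma zero_int:
  fixes h :: "real \<Rightarrow> complex"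
  assumes "\<And>t. t \<in> {0..x} \<Longrightarrow> h t = 0"
  shows "(LINT t:{0..x}|lborel. h t) = 0"
proof -
  have "(LINT t:{0..x}|lborel. h t) = (LINT t:{0..x}|lborel. (0::complex))"
    by (rule set_lebesgue_integral_cong) (use assms in auto)
  then show ?thesis by simp
qed

lemma tail_int:
  fixes h :: "real \<Rightarrow> complex"
  assumes "\<And>t. t > R \<Longrightarrow> h t = 0" and "R \<le> x"
  shows "(LINT t:{0..x}|lborel. h t) = (LINT t:{0..R}|lborel. h t)"
proof -
  have "(\<lambda>t. indicator {0..x} t *\<^sub>R h t) = (\<lambda>t. indicator {0..R} t *\<^sub>R h t)"
  proof
    fix t show "indicator {0..x} t *\<^sub>R h t = indicator {0..R} t *\<^sub>R h t"
      using assms by (cases "t > R") (auto simp: indicator_def)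
  qed
  then show ?thesis unfolding set_lebesgue_integral_def by simp
qed

lemma solves_scale:
  assumes "solves V z f f'"
  shows "solves V z (\<lambda>x. a * f x) (\<lambda>x. a * f' x)"
  using solves_lin[OF assms assms, of a 0] by simp




lemma eig_part:
  fixes q :: "real \<Rightarrow> complex" and \<gamma> :: real
    and Ep Em Edp Edm :: "real \<Rightarrow> complex \<Rightarrow> complex"
  assumes sol_p: "\<And>lam. lam \<noteq> 0 \<Longrightarrow> solves q lam (\<lambda>x. psi_p Ep x lam) (\<lambda>x. dpsi_p Edp x lam)"
    and sol_m: "\<And>lam. lam \<noteq> 0 \<Longrightarrow> solves q lam (\<lambda>x. psi_m Em x lam) (\<lambda>x. dpsi_m Edm x lam)"
    and lim_p: "\<And>lam. lam \<noteq> 0 \<Longrightarrow>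
                  ((\<lambda>x. cmod (Ep x lam) + cmod (Edp x lam)) \<longlongrightarrow> 0) at_top"
    and lim_m: "\<And>lam. lam \<noteq> 0 \<Longrightarrow>
                  ((\<lambda>x. cmod (Em x lam) + cmod (Edm x lam)) \<longlongrightarrow> 0) at_top"
    and R: "R > 0" and lam: "lam \<notin> nonneg_axis" and lamg: "lam \<noteq> \<i> * complex_of_real \<gamma>"
  shows "is_eigenvalue_HR q \<gamma> R lam \<longleftrightarrow> fR Ep Em Edp Edm \<gamma> R lam = 0"
proof -
  define \<mu> where "\<mu> = lam - \<i> * complex_of_real \<gamma>"
  have mu0: "\<mu> \<noteq> 0" using lamg by (simp add: \<mu>_def)
  have lam0: "lam \<noteq> 0" using lam by (auto simp: nonneg_axis_iff)
  define V where "V = (\<lambda>t. q t + \<i> * complex_of_real \<gamma> * indicator {0..R} t)"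
  define P where "P = (\<lambda>x. psi_p Ep x \<mu>)"
  define P' where "P' = (\<lambda>x. dpsi_p Edp x \<mu>)"
  define M where "M = (\<lambda>x. psi_m Em x \<mu>)"
  define M' where "M' = (\<lambda>x. dpsi_m Edm x \<mu>)"
  define pl where "pl = (\<lambda>x. psi_p Ep x lam)"
  define pl' where "pl' = (\<lambda>x. dpsi_p Edp x lam)"
  define ml where "ml = (\<lambda>x. psi_m Em x lam)"
  define ml' where "ml' = (\<lambda>x. dpsi_m Edm x lam)"
  have sP: "solves q \<mu> P P'" unfolding P_def P'_def using sol_p[OF mu0] .
  have sM: "solves q \<mu> M M'" unfolding M_def M'_def using sol_m[OF mu0] .
  have spl: "solves q lam pl pl'" unfolding pl_def pl'_def using sol_p[OF lam0] .
  have sml: "solves q lam ml ml'" unfolding ml_def ml'_def using sol_m[OF lam0] .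
  define Wm where "Wm = - 2 * \<i> * csqrt_up \<mu>"
  define Wl where "Wl = - 2 * \<i> * csqrt_up lam"
  have Wm0: "Wm \<noteq> 0" using csqrt_up_nz[OF mu0] by (simp add: Wm_def)
  have Wl0: "Wl \<noteq> 0" using csqrt_up_nz[OF lam0] by (simp add: Wl_def)
  have WmX: "P x * M' x - P' x * M x = Wm" if "x \<ge> 0" for x
    unfolding P_def P'_def M_def M'_def Wm_def
    by (rule Wpm[OF sol_p[OF mu0] sol_m[OF mu0] lim_p[OF mu0] lim_m[OF mu0] that])
  have WlX: "pl x * ml' x - pl' x * ml x = Wl" if "x \<ge> 0" for x
    unfolding pl_def pl'_def ml_def ml'_def Wl_def
    by (rule Wpm[OF sol_p[OF lam0] sol_m[OF lam0] lim_p[OF lam0] lim_m[OF lam0] that])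
  define ul where "ul = (\<lambda>x. M 0 * P x - P 0 * M x)"
  define ul' where "ul' = (\<lambda>x. M 0 * P' x - P 0 * M' x)"
  have sul: "solves q \<mu> ul ul'" unfolding ul_def ul'_def using solves_lin[OF sP sM, of "M 0" "- P 0"] by simp
  define Wlp where "Wlp = ul R * pl' R - ul' R * pl R"
  have fRid: "Wlp = \<i> * exp (\<i> * csqrt_up lam * complex_of_real R) * fR Ep Em Edp Edm \<gamma> R lam"
    unfolding Wlp_def ul_def ul'_def P_def P'_def M_def M'_def pl_def pl'_def \<mu>_def
    by (rule fR_wronsk)
  have fR_iff: "fR Ep Em Edp Edm \<gamma> R lam = 0 \<longleftrightarrow> Wlp = 0" unfolding fRid by simp
  have V1: "V t - lam = q t - \<mu>" if "t \<in> {0..R}" for t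
    using that by (simp add: V_def \<mu>_def)
  have V2: "V t - lam = q t - lam" if "t > R" for t
    using that by (simp add: V_def)
  show ?thesis
  proof
    assume "is_eigenvalue_HR q \<gamma> R lam"
    then obtain u u' where su: "solves V lam u u'" and u0: "u 0 = 0"
      and L2: "set_integrable lborel {0..} (\<lambda>x. (cmod (u x))\<^sup>2)" and nz: "\<exists>x\<ge>0. u x \<noteq> 0"
      unfolding is_eigenvalue_HR_def V_def by blast
    have WuP: "u x * P' x - u' x * P x = - u' 0 * P 0" if "x \<in> {0..R}" for x
    proof -
      have "u x * P' x - u' x * P x = u 0 * P' 0 - u' 0 * P 0
          + (LINT t:{0..x}|lborel. u t * ((q t - \<mu>) * P t) - ((V t - lam) * u t) * P t)"
        by (rule wronsk(2)[OF su sP]) (use that R in auto)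
      also have "(LINT t:{0..x}|lborel. u t * ((q t - \<mu>) * P t) - ((V t - lam) * u t) * P t) = 0"
        by (rule zero_int) (use that V1 in auto)
      finally show ?thesis using u0 by simp
    qed
    have WuM: "u x * M' x - u' x * M x = - u' 0 * M 0" if "x \<in> {0..R}" for x
    proof -
      have "u x * M' x - u' x * M x = u 0 * M' 0 - u' 0 * M 0
          + (LINT t:{0..x}|lborel. u t * ((q t - \<mu>) * M t) - ((V t - lam) * u t) * M t)"
        by (rule wronsk(2)[OF su sM]) (use that R in auto)
      also have "(LINT t:{0..x}|lborel. u t * ((q t - \<mu>) * M t) - ((V t - lam) * u t) * M t) = 0"
        by (rule zero_int) (use that V1 in auto)
      finally show ?thesis using u0 by simp
    qed
    have Wul: "u x * pl' x - u' x * pl x = u R * pl' R - u' R * pl R" if "x \<ge> R" for x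
    proof -
      let ?h = "\<lambda>t. u t * ((q t - lam) * pl t) - ((V t - lam) * u t) * pl t"
      have a: "u x * pl' x - u' x * pl x = u 0 * pl' 0 - u' 0 * pl 0 + (LINT t:{0..x}|lborel. ?h t)"
        by (rule wronsk(2)[OF su spl]) (use that R in auto)
      have b: "u R * pl' R - u' R * pl R = u 0 * pl' 0 - u' 0 * pl 0 + (LINT t:{0..R}|lborel. ?h t)"
        by (rule wronsk(2)[OF su spl]) (use R in auto)
      have c: "(LINT t:{0..x}|lborel. ?h t) = (LINT t:{0..R}|lborel. ?h t)"
        by (rule tail_int) (use that V2 in auto)
      show ?thesis using a b c by simp
    qed
    have Wum: "u x * ml' x - u' x * ml x = u R * ml' R - u' R * ml R" if "x \<ge> R" for x
    proof -
      let ?h = "\<lambda>t. u t * ((q t - lam) * ml t) - ((V t - lam) * u t) * ml t"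
      have a: "u x * ml' x - u' x * ml x = u 0 * ml' 0 - u' 0 * ml 0 + (LINT t:{0..x}|lborel. ?h t)"
        by (rule wronsk(2)[OF su sml]) (use that R in auto)
      have b: "u R * ml' R - u' R * ml R = u 0 * ml' 0 - u' 0 * ml 0 + (LINT t:{0..R}|lborel. ?h t)"
        by (rule wronsk(2)[OF su sml]) (use R in auto)
      have c: "(LINT t:{0..x}|lborel. ?h t) = (LINT t:{0..R}|lborel. ?h t)"
        by (rule tail_int) (use that V2 in auto)
      show ?thesis using a b c by simp
    qed
    define a where "a = u R * pl' R - u' R * pl R"
    define b where "b = u R * ml' R - u' R * ml R"
    have dec: "u x * Wl = b * psi_p Ep x lam - a * psi_m Em x lam" if "x \<ge> R" for x
    proof -
      have "u x * Wl = u x * (pl x * ml' x - pl' x * ml x)" using WlX[of x] that R by simp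
      also have "\<dots> = (u x * ml' x - u' x * ml x) * pl x - (u x * pl' x - u' x * pl x) * ml x"
        by (rule decomp1)
      also have "\<dots> = b * pl x - a * ml x" using Wul[OF that] Wum[OF that] by (simp add: a_def b_def)
      finally show ?thesis by (simp add: pl_def ml_def)
    qed
    have a0: "a = 0"
    proof (rule ccontr)
      assume "a \<noteq> 0"
      show False
        using grow_contra[of u R Wl b Ep lam a Em Edp Edm, OF L2 dec Wl0 \<open>a \<noteq> 0\<close> lam _ lim_p[OF lam0] lim_m[OF lam0]] R
        by auto
    qed
    have d0: "u' 0 \<noteq> 0"
    proof
      assume d: "u' 0 = 0"
      have uz1: "u x = 0" if "x \<in> {0..R}" for x
      proof -
        have "u x * Wm = (u x * M' x - u' x * M x) * P x - (u x * P' x - u' x * P x) * M x"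
          using WmX[of x] that decomp1 by auto
        also have "\<dots> = 0" using WuP[OF that] WuM[OF that] d by simp
        finally show ?thesis using Wm0 by simp
      qed
      have uR': "u' R = 0"
      proof -
        have "u' R * Wm = (u R * M' R - u' R * M R) * P' R - (u R * P' R - u' R * P R) * M' R"
          using WmX[of R] R decomp2 by auto
        also have "\<dots> = 0" using WuP[of R] WuM[of R] R d by simp
        finally show ?thesis using Wm0 by simp
      qed
      have b0: "b = 0" unfolding b_def using uz1[of R] uR' R by simp
      have uz2: "u x = 0" if "x \<ge> R" for x
        using dec[OF that] a0 b0 Wl0 by simp
      show False using nz uz1 uz2 by (meson atLeastAtMost_iff linorder_le_cases)
    qed
    have uR: "u R * Wm = - u' 0 * ul R"
    proof -
      have "u R * Wm = (u R * M' R - u' R * M R) * P R - (u R * P' R - u' R * P R) * M R"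
        using WmX[of R] R decomp1 by auto
      also have "\<dots> = - u' 0 * ul R"
      proof -
        have h1: "u R * P' R - u' R * P R = - u' 0 * P 0" using WuP[of R] R by simp
        have h2: "u R * M' R - u' R * M R = - u' 0 * M 0" using WuM[of R] R by simp
        show ?thesis unfolding ul_def h1 h2 by (simp add: algebra_simps)
      qed
      finally show ?thesis .
    qed
    have uR'': "u' R * Wm = - u' 0 * ul' R"
    proof -
      have "u' R * Wm = (u R * M' R - u' R * M R) * P' R - (u R * P' R - u' R * P R) * M' R"
        using WmX[of R] R decomp2 by auto
      also have "\<dots> = - u' 0 * ul' R"
      proof -
        have h1: "u R * P' R - u' R * P R = - u' 0 * P 0" using WuP[of R] R by simp
        have h2: "u R * M' R - u' R * M R = - u' 0 * M 0" using WuM[of R] R by simp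
        show ?thesis unfolding ul'_def h1 h2 by (simp add: algebra_simps)
      qed
      finally show ?thesis .
    qed
    have "0 = a * Wm" using a0 by simp
    also have "\<dots> = (u R * Wm) * pl' R - (u' R * Wm) * pl R" unfolding a_def by (simp add: algebra_simps)
    also have "\<dots> = - u' 0 * Wlp" unfolding uR uR'' Wlp_def by (simp add: algebra_simps)
    finally have "Wlp = 0" using d0 by simp
    then show "fR Ep Em Edp Edm \<gamma> R lam = 0" using fR_iff by simp
  next
    assume "fR Ep Em Edp Edm \<gamma> R lam = 0"
    then have Wlp0: "Wlp = 0" using fR_iff by simp
    define Wlm where "Wlm = ul R * ml' R - ul' R * ml R"
    define D where "D = Wlm / Wl"
    have ulR: "ul R = D * pl R"
    proof -
      have "ul R * Wl = ul R * (pl R * ml' R - pl' R * ml R)" using WlX[of R] R by simp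
      also have "\<dots> = Wlm * pl R - Wlp * ml R" unfolding Wlm_def Wlp_def by (rule decomp1)
      finally show ?thesis using Wlp0 Wl0 by (simp add: D_def field_simps)
    qed
    have ulR': "ul' R = D * pl' R"
    proof -
      have "ul' R * Wl = ul' R * (pl R * ml' R - pl' R * ml R)" using WlX[of R] R by simp
      also have "\<dots> = Wlm * pl' R - Wlp * ml' R" unfolding Wlm_def Wlp_def by (rule decomp2)
      finally show ?thesis using Wlp0 Wl0 by (simp add: D_def field_simps)
    qed
    define ug where "ug = (\<lambda>x. if x \<le> R then ul x else D * pl x)"
    define ug' where "ug' = (\<lambda>x. if x \<le> R then ul' x else D * pl' x)"
    have sug: "solves V lam ug ug'"
      unfolding ug_def ug'_def
      by (rule solves_glue[OF sul solves_scale[OF spl] _ ulR ulR' V1 V2]) (use R in auto)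
    have ug0: "ug 0 = 0" using R by (simp add: ug_def ul_def)
    have cont: "continuous_on {0..} ug" using solves_cont(1)[OF sug] .
    have I1: "set_integrable lborel {0..R} (\<lambda>x. (cmod (ug x))\<^sup>2)"
      by (rule borel_integrable_atLeastAtMost') (intro continuous_intros continuous_on_subset[OF cont], auto)
    obtain Mb where Mb: "\<And>x. x \<ge> 0 \<Longrightarrow> cmod (pl x) \<le> Mb * exp (- Im (csqrt_up lam) * x)"
      using psi_p_decay[OF sol_p[OF lam0] lim_p[OF lam0]] unfolding pl_def by blast
    have ugR: "ug x = D * pl x" if "x \<ge> R" for x
      using that ulR by (cases "x = R") (auto simp: ug_def)
    have I2: "set_integrable lborel {R..} (\<lambda>x. (cmod (ug x))\<^sup>2)"
    proof (rule L2_tail[where M = "cmod D * Mb" and c = "Im (csqrt_up lam)"])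
      show "continuous_on {R..} ug" by (rule continuous_on_subset[OF cont]) (use R in auto)
      show "Im (csqrt_up lam) > 0" by (rule Im_csqrt_up_pos[OF lam])
      fix x :: real assume x: "x \<ge> R"
      have "cmod (ug x) = cmod D * cmod (pl x)" using ugR[OF x] by (simp add: norm_mult)
      also have "\<dots> \<le> cmod D * (Mb * exp (- Im (csqrt_up lam) * x))"
        by (rule mult_left_mono[OF Mb]) (use x R in auto)
      finally show "cmod (ug x) \<le> cmod D * Mb * exp (- Im (csqrt_up lam) * x)" by (simp add: mult.assoc)
    qed
    have L2: "set_integrable lborel {0..} (\<lambda>x. (cmod (ug x))\<^sup>2)"
    proof -
      have "{0..} = {0..R} \<union> {R..}" using R by auto
      then show ?thesis using set_integrable_Un[OF I1 I2] by simp
    qed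
    have nz: "\<exists>x\<ge>0. ug x \<noteq> 0"
    proof (cases "D = 0")
      case False
      have "eventually (\<lambda>x. cmod (Ep x lam) < 1) at_top"
        using order_tendstoD(2)[OF tendsto_norm[OF lim_split(1)[OF lim_p[OF lam0]]], of 1] by simp
      then obtain X where X: "\<And>x. x \<ge> X \<Longrightarrow> cmod (Ep x lam) < 1"
        by (auto simp: eventually_at_top_linorder)
      define x where "x = max X R"
      have x: "x \<ge> R" "x \<ge> X" "x \<ge> 0" using R by (auto simp: x_def)
      have "1 + Ep x lam \<noteq> 0"
      proof
        assume "1 + Ep x lam = 0"
        then have "Ep x lam = -1" by (simp add: add_eq_0_iff)
        then show False using X[OF x(2)] by simp
      qed
      then have "pl x \<noteq> 0" by (simp add: pl_def psi_p_def)
      then have "ug x \<noteq> 0" using ugR[OF x(1)] False by simp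
      then show ?thesis using x(3) by blast
    next
      case True
      have Wlm0: "Wlm = 0" using True Wl0 by (simp add: D_def)
      have z1: "ul R = 0" "ul' R = 0" using ulR ulR' True by auto
      have w: "P R * M' R - P' R * M R = Wm" using WmX[of R] R by simp
      have "P 0 * Wm = ul R * P' R - ul' R * P R"
        unfolding ul_def ul'_def w[symmetric] by (simp add: algebra_simps)
      then have P0: "P 0 = 0" using z1 Wm0 by simp
      have "M 0 * Wm = ul R * M' R - ul' R * M R"
        unfolding ul_def ul'_def w[symmetric] by (simp add: algebra_simps)
      then have M0: "M 0 = 0" using z1 Wm0 by simp
      have "Wm = 0" using WmX[of 0] P0 M0 by simp
      then show ?thesis using Wm0 by simp
    qed
    show "is_eigenvalue_HR q \<gamma> R lam"
      unfolding is_eigenvalue_HR_def using sug ug0 L2 nz unfolding V_def by blast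
  qed
qed


theorem mainTheorem1:
  fixes q :: "real \<Rightarrow> complex" and \<gamma> :: real
    and Ep Em Edp Edm :: "real \<Rightarrow> complex \<Rightarrow> complex"
  assumes gamma_pos: "\<gamma> > 0"
    and q_L1: "set_integrable lborel {0..} q"
    and sol_p: "\<And>lam. lam \<noteq> 0 \<Longrightarrow> solves q lam (\<lambda>x. psi_p Ep x lam) (\<lambda>x. dpsi_p Edp x lam)"
    and sol_m: "\<And>lam. lam \<noteq> 0 \<Longrightarrow> solves q lam (\<lambda>x. psi_m Em x lam) (\<lambda>x. dpsi_m Edm x lam)"
    and lim_p: "\<And>lam. lam \<noteq> 0 \<Longrightarrow>
                  ((\<lambda>x. cmod (Ep x lam) + cmod (Edp x lam)) \<longlongrightarrow> 0) at_top"
    and lim_m: "\<And>lam. lam \<noteq> 0 \<Longrightarrow>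
                  ((\<lambda>x. cmod (Em x lam) + cmod (Edm x lam)) \<longlongrightarrow> 0) at_top"
    and bound: "\<exists>C. \<forall>x\<ge>0. \<forall>lam. cmod lam \<ge> 1 \<longrightarrow>
                  cmod (Ep x lam) + cmod (Edp x lam) \<le> C / sqrt (cmod lam)
                \<and> cmod (Em x lam) + cmod (Edm x lam) \<le> C / sqrt (cmod lam)"
    and anal: "\<And>x. x \<ge> 0 \<Longrightarrow>
                 (Ep x) analytic_on (- nonneg_axis) \<and> (Em x) analytic_on (- nonneg_axis)
               \<and> (Edp x) analytic_on (- nonneg_axis) \<and> (Edm x) analytic_on (- nonneg_axis)"
  shows "(\<forall>R>0. \<forall>lam. lam \<notin> nonneg_axis \<and> lam \<noteq> \<i> * complex_of_real \<gamma> \<longrightarrow>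
             (is_eigenvalue_HR q \<gamma> R lam \<longleftrightarrow> fR Ep Em Edp Edm \<gamma> R lam = 0))
       \<and> (\<exists>C1>0. \<forall>R>0. \<forall>lam. cmod lam \<ge> 1 + \<gamma> \<longrightarrow>
             cmod (calE1 Ep Edp \<gamma> R lam) + cmod (calE2 Ep Em Edp Edm \<gamma> R lam) \<le> C1)
       \<and> (\<forall>R>0. let S = - (nonneg_axis \<union> (\<lambda>z. \<i> * complex_of_real \<gamma> + z) ` nonneg_axis) in
             (fR Ep Em Edp Edm \<gamma> R) analytic_on S
           \<and> (calE1 Ep Edp \<gamma> R) analytic_on S
           \<and> (calE2 Ep Em Edp Edm \<gamma> R) analytic_on S)"
proof (intro conjI)
  show "\<forall>R>0. \<forall>lam. lam \<notin> nonneg_axis \<and> lam \<noteq> \<i> * complex_of_real \<gamma> \<longrightarrow>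
             (is_eigenvalue_HR q \<gamma> R lam \<longleftrightarrow> fR Ep Em Edp Edm \<gamma> R lam = 0)"
  proof (intro allI impI)
    fix R :: real and lam :: complex
    assume "R > 0" "lam \<notin> nonneg_axis \<and> lam \<noteq> \<i> * complex_of_real \<gamma>"
    then show "is_eigenvalue_HR q \<gamma> R lam \<longleftrightarrow> fR Ep Em Edp Edm \<gamma> R lam = 0"
      using eig_part[OF sol_p sol_m lim_p lim_m] by blast
  qed
  show "\<exists>C1>0. \<forall>R>0. \<forall>lam. cmod lam \<ge> 1 + \<gamma> \<longrightarrow>
             cmod (calE1 Ep Edp \<gamma> R lam) + cmod (calE2 Ep Em Edp Edm \<gamma> R lam) \<le> C1"
    by (rule bound_part[OF gamma_pos bound])
  show "\<forall>R>0. let S = - (nonneg_axis \<union> (\<lambda>z. \<i> * complex_of_real \<gamma> + z) ` nonneg_axis) in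
             (fR Ep Em Edp Edm \<gamma> R) analytic_on S
           \<and> (calE1 Ep Edp \<gamma> R) analytic_on S
           \<and> (calE2 Ep Em Edp Edm \<gamma> R) analytic_on S"
  proof (intro allI impI)
    fix R :: real assume R: "R > 0"
    show "let S = - (nonneg_axis \<union> (\<lambda>z. \<i> * complex_of_real \<gamma> + z) ` nonneg_axis) in
             (fR Ep Em Edp Edm \<gamma> R) analytic_on S
           \<and> (calE1 Ep Edp \<gamma> R) analytic_on S
           \<and> (calE2 Ep Em Edp Edm \<gamma> R) analytic_on S"
      using analytic_part[OF anal R] by simp
  qed
qed

end
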